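(* Let $\mathcal{Z}\subset\mathbb{R}^d$ be a convex compact set with $\max_{\mathbf{z},\mathbf{z}'\in\mathcal{Z}}\|\mathbf{z}-\mathbf{z}'\|\le D$. Let $F:\mathcal{Z}\to\mathbb{R}^d$ be single-valued and $\mu$-strongly monotone, of the form $F(\mathbf{z})=\frac1n\sum_{i=1}^nF_i(\mathbf{z})$ with each $F_i$ $L$-Lipschitz continuous. Fix $\mathbf{w}\in\mathcal{Z}$, $\mathbf{w}^{(0)}\in\mathcal{Z}$ and an integer $T\ge1$, and run the following SVRG method: set $\eta=\mu/(4(L+\mu)^2)$, $S=\lceil4\log(4)(L+\mu)^2/\mu^2\rceil$, $B(\mathbf{z})=F(\mathbf{z})-\mu(\mathbf{z}-\mathbf{w})$, $B_i(\mathbf{z})=\frac1nF_i(\mathbf{z})-\frac{\mu}{n}(\mathbf{z}-\mathbf{w})$, and let $R(\mathbf{u}):=\arg\min_{\mathbf{z}'\in\mathcal{Z}}\frac{1}{2\eta}\|\mathbf{z}'-\mathbf{u}\|^2+\frac{\mu}{2}\|\mathbf{z}'-\mathbf{w}\|^2$. For $t=0,\dots,T-1$: set $\bar B^{(t)}=B(\mathbf{w}^{(t)})$ and $\mathbf{z}^{(0)}=\mathbf{w}^{(t)}$; for $s=0,\dots,S-1$, sample $i$ uniformly from $\{1,\dots,n\}$ (independently), set $B^{(s)}=\bar B^{(t)}-nB_i(\mathbf{w}^{(t)})+nB_i(\mathbf{z}^{(s)})$ and $\mathbf{z}^{(s+1)}=R(\mathbf{z}^{(s)}-\eta B^{(s)})$;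 then set $\mathbf{w}^{(t+1)}=\mathbf{z}^{(S)}$. Output $\bar{\mathbf{z}}=\mathrm{Proj}_{\mathcal{Z}}\big(\mathbf{w}^{(T)}-F(\mathbf{w}^{(T)})/(\sqrt2L)\big)$. Then $$\mathbb{E}\Big[\max_{\mathbf{z}\in\mathcal{Z}}F(\bar{\mathbf{z}})^{\top}(\bar{\mathbf{z}}-\mathbf{z})\Big]\le D^2L(2+\sqrt2)(\sqrt3/2)^T,$$ and, with $\mathbf{w}_*$ the solution of $\mathrm{SVI}(F,\mathcal{Z})$, $$\mu\,\mathbb{E}\|\bar{\mathbf{z}}-\mathbf{w}_*\|^2\le D^2L(2+\sqrt2)(\sqrt3/2)^T.$$
   Context: $\mathrm{Proj}_{\mathcal{Z}}$ is the Euclidean projection. $F$ is $\mu$-strongly monotone if $\langle F(\mathbf{z})-F(\mathbf{z}'),\mathbf{z}-\mathbf{z}'\rangle\ge\mu\|\mathbf{z}-\mathbf{z}'\|^2$ for all $\mathbf{z},\mathbf{z}'\in\mathcal{Z}$; $\mathrm{SVI}(F,\mathcal{Z})$ asks for $\mathbf{w}_*\in\mathcal{Z}$ with $\langle F(\mathbf{w}_* ),\mathbf{z}-\mathbf{w}_*\rangle\ge0$ for all $\mathbf{z}\in\mathcal{Z}$. The map $R$ is the resolvent $(I+\eta A)^{-1}$ of $A(\mathbf{z})=\mu(\mathbf{z}-\mathbf{w})+N_{\mathcal{Z}}(\mathbf{z})$, with $N_{\mathcal{Z}}$ the normal cone of $\mathcal{Z}$. *)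

theory Defs
  imports "HOL-Analysis.Analysis" "HOL-Probability.Probability"
begin

definition avgF :: "nat \<Rightarrow> (nat \<Rightarrow> 'a::real_vector \<Rightarrow> 'a) \<Rightarrow> 'a \<Rightarrow> 'a" where
  "avgF n Fi z = (1 / real n) *\<^sub>R (\<Sum>i<n. Fi i z)"

definition strongly_monotone_on :: "'a::real_inner set \<Rightarrow> real \<Rightarrow> ('a \<Rightarrow> 'a) \<Rightarrow> bool" where
  "strongly_monotone_on Z \<mu> F \<longleftrightarrow>
     (\<forall>z\<in>Z. \<forall>z'\<in>Z. (F z - F z') \<bullet> (z - z') \<ge> \<mu> * (norm (z - z'))\<^sup>2)"

definition resolv :: "'a::real_inner set \<Rightarrow> real \<Rightarrow> real \<Rightarrow> 'a \<Rightarrow> 'a \<Rightarrow> 'a" where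
  "resolv Z \<eta> \<mu> w u =
     (THE z'. z' \<in> Z \<and> (\<forall>z\<in>Z.
        1 / (2 * \<eta>) * (norm (z' - u))\<^sup>2 + \<mu> / 2 * (norm (z' - w))\<^sup>2
        \<le> 1 / (2 * \<eta>) * (norm (z - u))\<^sup>2 + \<mu> / 2 * (norm (z - w))\<^sup>2))"

definition svrgB :: "nat \<Rightarrow> (nat \<Rightarrow> 'a::real_vector \<Rightarrow> 'a) \<Rightarrow> real \<Rightarrow> 'a \<Rightarrow> 'a \<Rightarrow> 'a" where
  "svrgB n Fi \<mu> w z = avgF n Fi z - \<mu> *\<^sub>R (z - w)"

definition svrgBi :: "nat \<Rightarrow> (nat \<Rightarrow> 'a::real_vector \<Rightarrow> 'a) \<Rightarrow> real \<Rightarrow> 'a \<Rightarrow> nat \<Rightarrow> 'a \<Rightarrow> 'a" where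
  "svrgBi n Fi \<mu> w i z = (1 / real n) *\<^sub>R Fi i z - (\<mu> / real n) *\<^sub>R (z - w)"

primrec svrg_inner :: "nat \<Rightarrow> (nat \<Rightarrow> 'a::real_inner \<Rightarrow> 'a) \<Rightarrow> 'a set \<Rightarrow> real \<Rightarrow> real \<Rightarrow> 'a
    \<Rightarrow> 'a \<Rightarrow> (nat \<Rightarrow> nat) \<Rightarrow> nat \<Rightarrow> 'a" where
  "svrg_inner n Fi Z \<mu> \<eta> w wt idx 0 = wt"
| "svrg_inner n Fi Z \<mu> \<eta> w wt idx (Suc s) =
     (let z = svrg_inner n Fi Z \<mu> \<eta> w wt idx s;
          i = idx s;
          Bs = svrgB n Fi \<mu> w wt - real n *\<^sub>R svrgBi n Fi \<mu> w i wt
               + real n *\<^sub>R svrgBi n Fi \<mu> w i z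
      in resolv Z \<eta> \<mu> w (z - \<eta> *\<^sub>R Bs))"

primrec svrg_outer :: "nat \<Rightarrow> (nat \<Rightarrow> 'a::real_inner \<Rightarrow> 'a) \<Rightarrow> 'a set \<Rightarrow> real \<Rightarrow> real \<Rightarrow> 'a
    \<Rightarrow> 'a \<Rightarrow> nat \<Rightarrow> (nat \<Rightarrow> nat) \<Rightarrow> nat \<Rightarrow> 'a" where
  "svrg_outer n Fi Z \<mu> \<eta> w w0 S idx 0 = w0"
| "svrg_outer n Fi Z \<mu> \<eta> w w0 S idx (Suc t) =
     svrg_inner n Fi Z \<mu> \<eta> w (svrg_outer n Fi Z \<mu> \<eta> w w0 S idx t) (\<lambda>s. idx (t * S + s)) S"

definition svrg_output :: "nat \<Rightarrow> (nat \<Rightarrow> 'a::euclidean_space \<Rightarrow> 'a) \<Rightarrow> 'a set \<Rightarrow> real \<Rightarrow> real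
    \<Rightarrow> 'a \<Rightarrow> 'a \<Rightarrow> nat \<Rightarrow> (nat \<Rightarrow> nat) \<Rightarrow> 'a" where
  "svrg_output n Fi Z \<mu> L w w0 T idx =
     (let \<eta> = \<mu> / (4 * (L + \<mu>)\<^sup>2);
          S = nat \<lceil>4 * ln 4 * (L + \<mu>)\<^sup>2 / \<mu>\<^sup>2\<rceil>;
          wT = svrg_outer n Fi Z \<mu> \<eta> w w0 S idx T
      in closest_point Z (wT - (1 / (sqrt 2 * L)) *\<^sub>R avgF n Fi wT))"

definition svrg_samples :: "nat \<Rightarrow> real \<Rightarrow> real \<Rightarrow> nat \<Rightarrow> (nat \<Rightarrow> nat) pmf" where
  "svrg_samples n \<mu> L T =
     (let S = nat \<lceil>4 * ln 4 * (L + \<mu>)\<^sup>2 / \<mu>\<^sup>2\<rceil>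
      in Pi_pmf {..<T * S} 0 (\<lambda>_. pmf_of_set {..<n}))"

end

theory Submission
  imports Defs
begin

lemma expectation_pair_fin:
  fixes h :: "'a \<times> 'b \<Rightarrow> real"
  assumes "finite (set_pmf p)" "finite (set_pmf q)"
  shows "measure_pmf.expectation (pair_pmf p q) h =
         measure_pmf.expectation q (\<lambda>b. measure_pmf.expectation p (\<lambda>a. h (a,b)))"
proof -
  have "measure_pmf.expectation (pair_pmf p q) h = (\<Sum>x\<in>set_pmf p \<times> set_pmf q. h x * pmf (pair_pmf p q) x)"
    using assms by (intro integral_measure_pmf_real) auto
  also have "\<dots> = (\<Sum>a\<in>set_pmf p. \<Sum>b\<in>set_pmf q. h (a,b) * (pmf p a * pmf q b))"
    unfolding sum.cartesian_product by (intro sum.cong refl) (auto simp: pmf_pair)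
  also have "\<dots> = (\<Sum>b\<in>set_pmf q. \<Sum>a\<in>set_pmf p. h (a,b) * (pmf p a * pmf q b))"
    by (rule sum.swap)
  also have "\<dots> = (\<Sum>b\<in>set_pmf q. (\<Sum>a\<in>set_pmf p. h (a,b) * pmf p a) * pmf q b)"
    by (simp add: sum_distrib_right mult.assoc)
  also have "\<dots> = (\<Sum>b\<in>set_pmf q. measure_pmf.expectation p (\<lambda>a. h (a,b)) * pmf q b)"
    using assms by (intro sum.cong refl arg_cong2[where f="(*)"] integral_measure_pmf_real[symmetric]) auto
  also have "\<dots> = measure_pmf.expectation q (\<lambda>b. measure_pmf.expectation p (\<lambda>a. h (a,b)))"
    using assms by (intro integral_measure_pmf_real[symmetric]) auto
  finally show ?thesis .
qed

lemma expectation_Pi_decomp: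
  fixes \<Phi> :: "('i \<Rightarrow> 'a) \<Rightarrow> real"
  assumes "finite A" "k \<in> A" "\<And>i. finite (set_pmf (P i))"
  shows "measure_pmf.expectation (Pi_pmf A d P) \<Phi> =
         measure_pmf.expectation (Pi_pmf A d P) (\<lambda>f. measure_pmf.expectation (P k) (\<lambda>x. \<Phi> (f(k:=x))))"
proof -
  define B where "B = A - {k}"
  have A: "A = insert k B" "k \<notin> B" "finite B" using assms B_def by auto
  have fin: "finite (set_pmf (Pi_pmf B d P))"
    using A assms by (subst set_Pi_pmf) auto
  have eq: "Pi_pmf A d P = map_pmf (\<lambda>(y,f). f(k:=y)) (pair_pmf (P k) (Pi_pmf B d P))"
    using A by (simp add: Pi_pmf_insert)
  have "measure_pmf.expectation (Pi_pmf A d P) \<Phi> =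
        measure_pmf.expectation (pair_pmf (P k) (Pi_pmf B d P)) (\<lambda>(y,f). \<Phi> (f(k:=y)))"
    unfolding eq by (simp add: case_prod_unfold)
  also have "\<dots> = measure_pmf.expectation (Pi_pmf B d P) (\<lambda>f. measure_pmf.expectation (P k) (\<lambda>x. \<Phi> (f(k:=x))))"
    using fin assms by (subst expectation_pair_fin) auto
  also have "\<dots> = measure_pmf.expectation (pair_pmf (P k) (Pi_pmf B d P))
       (\<lambda>yf. measure_pmf.expectation (P k) (\<lambda>x. \<Phi> ((snd yf)(k:=x))))"
    using expectation_pair_pmf_snd[where f="\<lambda>f. measure_pmf.expectation (P k) (\<lambda>x. \<Phi> (f(k:=x)))" and p="P k" and q="Pi_pmf B d P"] by simp
  also have "\<dots> = measure_pmf.expectation (pair_pmf (P k) (Pi_pmf B d P))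
       (\<lambda>(y,f). measure_pmf.expectation (P k) (\<lambda>x. \<Phi> ((f(k:=y))(k:=x))))"
    by (simp add: case_prod_unfold)
  also have "\<dots> = measure_pmf.expectation (Pi_pmf A d P) (\<lambda>f. measure_pmf.expectation (P k) (\<lambda>x. \<Phi> (f(k:=x))))"
    unfolding eq by (simp add: case_prod_unfold)
  finally show ?thesis .
qed

lemma quad_complete:
  fixes z u w :: "'a::real_inner"
  assumes "a > -1"
  shows "(norm (z - u))\<^sup>2 + a * (norm (z - w))\<^sup>2 =
     (1 + a) * (norm (z - (1/(1+a)) *\<^sub>R (u + a *\<^sub>R w)))\<^sup>2
     + ((norm u)\<^sup>2 + a * (norm w)\<^sup>2 - (norm (u + a *\<^sub>R w))\<^sup>2 / (1 + a))"
proof -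
  define v where "v = u + a *\<^sub>R w"
  have h: "1 + a > 0" using assms by simp
  have 1: "(norm (z - (1/(1+a)) *\<^sub>R v))\<^sup>2 = (norm z)\<^sup>2 - 2*(z\<bullet>v)/(1+a) + (norm v)\<^sup>2/(1+a)\<^sup>2"
    unfolding power2_norm_eq_inner by (simp add: inner_diff inner_commute power2_eq_square)
  have 2: "z\<bullet>v = z\<bullet>u + a*(z\<bullet>w)" by (simp add: v_def inner_add)
  have 3: "(norm (z - u))\<^sup>2 = (norm z)\<^sup>2 - 2*(z\<bullet>u) + (norm u)\<^sup>2"
    "(norm (z - w))\<^sup>2 = (norm z)\<^sup>2 - 2*(z\<bullet>w) + (norm w)\<^sup>2"
    unfolding power2_norm_eq_inner by (simp_all add: inner_diff inner_commute)
  have 4: "(1 + a) * ((norm z)\<^sup>2 - 2*(z\<bullet>v)/(1+a) + (norm v)\<^sup>2/(1+a)\<^sup>2)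
     = (1+a) * (norm z)\<^sup>2 - 2*(z\<bullet>v) + (norm v)\<^sup>2/(1+a)"
  proof -
    have "(1+a) * ((norm v)\<^sup>2/(1+a)\<^sup>2) = (norm v)\<^sup>2/(1+a)" using h by (simp add: power2_eq_square)
    moreover have "(1+a)*(2*(z\<bullet>v)/(1+a)) = 2*(z\<bullet>v)" using h by simp
    ultimately show ?thesis by (simp add: right_diff_distrib distrib_left)
  qed
  have 5: "(1+a) * (norm (z - (1/(1+a)) *\<^sub>R v))\<^sup>2 = (1+a) * (norm z)\<^sup>2 - 2*(z\<bullet>v) + (norm v)\<^sup>2/(1+a)"
    using 1 4 by simp
  define X where "X = (norm v)\<^sup>2/(1+a)"
  show ?thesis
    unfolding v_def[symmetric] 5 3 2 X_def[symmetric] by (simp add: algebra_simps)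
qed

lemma resolv_eq:
  fixes Z :: "'a::euclidean_space set"
  assumes "convex Z" "closed Z" "Z \<noteq> {}" "\<eta> > 0" "\<mu> > 0"
  shows "resolv Z \<eta> \<mu> w u = closest_point Z ((1/(1+\<eta>*\<mu>)) *\<^sub>R (u + (\<eta>*\<mu>) *\<^sub>R w))"
proof -
  define a where "a = \<eta> * \<mu>"
  define c where "c = (1/(1+a)) *\<^sub>R (u + a *\<^sub>R w)"
  define C where "C = ((norm u)\<^sup>2 + a * (norm w)\<^sup>2 - (norm (u + a *\<^sub>R w))\<^sup>2 / (1 + a))"
  have a: "a > 0" using assms a_def by simp
  have phi: "1 / (2 * \<eta>) * (norm (z - u))\<^sup>2 + \<mu> / 2 * (norm (z - w))\<^sup>2
      = (1 / (2 * \<eta>)) * ((1 + a) * (norm (z - c))\<^sup>2 + C)" for z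
  proof -
    have "1 / (2 * \<eta>) * (norm (z - u))\<^sup>2 + \<mu> / 2 * (norm (z - w))\<^sup>2
       = (1 / (2 * \<eta>)) * ((norm (z - u))\<^sup>2 + a * (norm (z - w))\<^sup>2)"
      using assms by (simp add: a_def field_simps)
    also have "\<dots> = (1 / (2 * \<eta>)) * ((1 + a) * (norm (z - c))\<^sup>2 + C)"
      using quad_complete[of a z u w] a by (simp add: c_def C_def)
    finally show ?thesis .
  qed
  have mono: "(1 / (2 * \<eta>)) * ((1 + a) * x + C) \<le> (1 / (2 * \<eta>)) * ((1 + a) * y + C) \<longleftrightarrow> x \<le> y" for x y
    using a assms by (simp add: divide_le_cancel mult_le_cancel_left_pos add_pos_pos)
  let ?p = "closest_point Z c"
  have "resolv Z \<eta> \<mu> w u = ?p"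
    unfolding resolv_def phi mono
  proof (rule the_equality)
    show "?p \<in> Z \<and> (\<forall>z\<in>Z. (norm (?p - c))\<^sup>2 \<le> (norm (z - c))\<^sup>2)"
      using closest_point_in_set[OF assms(2,3)] closest_point_le[OF assms(2), of _ c]
      by (auto simp: dist_norm norm_minus_commute intro: power_mono)
    fix z' assume z': "z' \<in> Z \<and> (\<forall>z\<in>Z. (norm (z' - c))\<^sup>2 \<le> (norm (z - c))\<^sup>2)"
    show "z' = ?p"
    proof (rule closest_point_unique[OF assms(1,2)])
      show "z' \<in> Z" using z' by simp
      show "\<forall>z\<in>Z. dist c z' \<le> dist c z"
        using z' by (auto simp: dist_norm norm_minus_commute intro: power2_le_imp_le)
    qed
  qed
  then show ?thesis by (simp add: c_def a_def)
qed

lemma norm_diff_sq: "(norm (x - y))\<^sup>2 = (norm x)\<^sup>2 - 2 * (x \<bullet> y) + (norm (y::'a::real_inner))\<^sup>2"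
  unfolding power2_norm_eq_inner by (simp add: inner_diff inner_commute)

lemma sum_norm_sq:
  fixes A :: "'a::real_inner"
  shows "(\<Sum>i\<in>I. (norm (A - W i))\<^sup>2) = real (card I) * (norm A)\<^sup>2 - 2 * (A \<bullet> sum W I) + (\<Sum>i\<in>I. (norm (W i))\<^sup>2)"
proof -
  have "(\<Sum>i\<in>I. (norm (A - W i))\<^sup>2) = (\<Sum>i\<in>I. (norm A)\<^sup>2 - 2 * (A \<bullet> W i) + (norm (W i))\<^sup>2)"
    by (simp only: norm_diff_sq)
  also have "\<dots> = (\<Sum>i\<in>I. (norm A)\<^sup>2) - (\<Sum>i\<in>I. 2 * (A \<bullet> W i)) + (\<Sum>i\<in>I. (norm (W i))\<^sup>2)"
    by (simp only: sum.distrib sum_subtractf)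
  also have "(\<Sum>i\<in>I. 2 * (A \<bullet> W i)) = 2 * (A \<bullet> sum W I)"
    by (simp only: sum_distrib_left[symmetric] inner_sum_right)
  finally show ?thesis by simp
qed

lemma resolv_props:
  fixes Z :: "'a::euclidean_space set"
  assumes "convex Z" "closed Z" "Z \<noteq> {}" "\<eta> > 0" "\<mu> > 0"
  shows "resolv Z \<eta> \<mu> w u \<in> Z"
    and "norm (resolv Z \<eta> \<mu> w u - resolv Z \<eta> \<mu> w v) \<le> norm (u - v) / (1 + \<eta> * \<mu>)"
proof -
  have a: "1 + \<eta> * \<mu> > 0" using assms by (simp add: add_pos_pos)
  show "resolv Z \<eta> \<mu> w u \<in> Z"
    using resolv_eq[OF assms] closest_point_in_set[OF assms(2,3)] by simp
  have "norm (resolv Z \<eta> \<mu> w u - resolv Z \<eta> \<mu> w v)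
     \<le> norm ((1/(1+\<eta>*\<mu>)) *\<^sub>R (u + (\<eta>*\<mu>) *\<^sub>R w) - (1/(1+\<eta>*\<mu>)) *\<^sub>R (v + (\<eta>*\<mu>) *\<^sub>R w))"
    using resolv_eq[OF assms] closest_point_lipschitz[OF assms(1-3)] by (simp add: dist_norm)
  also have "\<dots> = norm ((1/(1+\<eta>*\<mu>)) *\<^sub>R (u - v))"
    by (simp add: algebra_simps)
  also have "\<dots> = norm (u - v) / (1 + \<eta> * \<mu>)" using a by simp
  finally show "norm (resolv Z \<eta> \<mu> w u - resolv Z \<eta> \<mu> w v) \<le> norm (u - v) / (1 + \<eta> * \<mu>)" .
qed

lemma resolv_fixed:
  fixes Z :: "'a::euclidean_space set"
  assumes "convex Z" "closed Z" "Z \<noteq> {}" "\<eta> > 0" "\<mu> > 0"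
    and "ws \<in> Z" "\<forall>z\<in>Z. g \<bullet> (z - ws) \<ge> 0"
  shows "resolv Z \<eta> \<mu> w (ws - \<eta> *\<^sub>R (g - \<mu> *\<^sub>R (ws - w))) = ws"
proof -
  have a: "1 + \<eta> * \<mu> > 0" using assms by (simp add: add_pos_pos)
  have c: "(1/(1+\<eta>*\<mu>)) *\<^sub>R ((ws - \<eta> *\<^sub>R (g - \<mu> *\<^sub>R (ws - w))) + (\<eta>*\<mu>) *\<^sub>R w)
     = ws - (\<eta>/(1+\<eta>*\<mu>)) *\<^sub>R g"
  proof -
    have "(ws - \<eta> *\<^sub>R (g - \<mu> *\<^sub>R (ws - w))) + (\<eta>*\<mu>) *\<^sub>R w = (1+\<eta>*\<mu>) *\<^sub>R ws - \<eta> *\<^sub>R g"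
      by (simp add: algebra_simps)
    moreover have "(1/(1+\<eta>*\<mu>)) *\<^sub>R ((1+\<eta>*\<mu>) *\<^sub>R ws - \<eta> *\<^sub>R g) = ws - (\<eta>/(1+\<eta>*\<mu>)) *\<^sub>R g"
      using a by (simp add: scaleR_diff_right)
    ultimately show ?thesis by simp
  qed
  define c where "c = \<eta>/(1+\<eta>*\<mu>)"
  have c0: "c \<ge> 0" using a assms(4) by (simp add: c_def)
  have "ws = closest_point Z (ws - c *\<^sub>R g)"
  proof (rule closest_point_unique[OF assms(1,2,6)], intro ballI)
    fix z assume z: "z \<in> Z"
    have e1: "dist (ws - c *\<^sub>R g) z = norm ((ws - z) - c *\<^sub>R g)"
      unfolding dist_norm by (rule arg_cong[where f=norm]) simp
    have e2: "(norm ((ws - z) - c *\<^sub>R g))\<^sup>2 = (norm (ws - z))\<^sup>2 - 2 * ((ws - z) \<bullet> (c *\<^sub>R g)) + (norm (c *\<^sub>R g))\<^sup>2"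
      by (rule norm_diff_sq)
    have e3: "(ws - z) \<bullet> (c *\<^sub>R g) = - (c * (g \<bullet> (z - ws)))"
    proof -
      have "(ws - z) \<bullet> g = - (g \<bullet> (z - ws))" by (simp add: inner_commute inner_diff_right inner_diff_left)
      then show ?thesis by (simp only: inner_scaleR_right)
    qed
    have e4: "c * (g \<bullet> (z - ws)) \<ge> 0" using assms(7) z c0 by simp
    have e5: "(norm (ws - z))\<^sup>2 \<ge> 0" by simp
    have e6: "dist (ws - c *\<^sub>R g) ws = norm (c *\<^sub>R g)" by (simp add: dist_norm)
    have "(dist (ws - c *\<^sub>R g) ws)\<^sup>2 \<le> (dist (ws - c *\<^sub>R g) z)\<^sup>2"
      unfolding e1 e2 e3 e6 using e4 e5 by linarith
    then show "dist (ws - c *\<^sub>R g) ws \<le> dist (ws - c *\<^sub>R g) z"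
      by (rule power2_le_imp_le) simp_all
  qed
  then have "closest_point Z (ws - (\<eta>/(1+\<eta>*\<mu>)) *\<^sub>R g) = ws" unfolding c_def by (rule sym)
  then show ?thesis unfolding resolv_eq[OF assms(1-5)] c .
qed

definition Gf :: "(nat \<Rightarrow> 'a::real_vector \<Rightarrow> 'a) \<Rightarrow> real \<Rightarrow> 'a \<Rightarrow> nat \<Rightarrow> 'a \<Rightarrow> 'a" where
  "Gf Fi \<mu> w i x = Fi i x - \<mu> *\<^sub>R (x - w)"

lemma avgF_lip:
  fixes Fi :: "nat \<Rightarrow> 'a::real_normed_vector \<Rightarrow> 'a"
  assumes "n \<ge> 1" "\<forall>i<n. L-lipschitz_on Z (Fi i)" "x \<in> Z" "y \<in> Z"
  shows "norm (avgF n Fi x - avgF n Fi y) \<le> L * norm (x - y)"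
proof -
  have "avgF n Fi x - avgF n Fi y = (1 / real n) *\<^sub>R (\<Sum>i<n. Fi i x - Fi i y)"
    by (simp add: avgF_def sum_subtractf scaleR_diff_right)
  hence "norm (avgF n Fi x - avgF n Fi y) = (1 / real n) * norm (\<Sum>i<n. Fi i x - Fi i y)"
    by simp
  also have "\<dots> \<le> (1 / real n) * (\<Sum>i<n. norm (Fi i x - Fi i y))"
    by (intro mult_left_mono norm_sum) auto
  also have "\<dots> \<le> (1 / real n) * (\<Sum>i<n. L * norm (x - y))"
    using assms
    by (intro mult_left_mono sum_mono) (auto simp: dist_norm[symmetric] intro: lipschitz_onD)
  also have "\<dots> = L * norm (x - y)" using assms(1) by simp
  finally show ?thesis .
qed

lemma sum_Gf: "(\<Sum>i<n. Gf Fi \<mu> w i x) = real n *\<^sub>R svrgB n Fi \<mu> w x" if "n \<ge> 1"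
  using that by (simp add: Gf_def svrgB_def avgF_def sum_subtractf scaleR_diff_right sum_constant_scaleR)

lemma sq_sum_le: "(a + b)\<^sup>2 \<le> 2 * a\<^sup>2 + 2 * (b::real)\<^sup>2"
proof -
  have "0 \<le> (a - b)\<^sup>2" by simp
  then show ?thesis unfolding power2_diff power2_sum by linarith
qed

lemma step_bound:
  fixes Z :: "'a::euclidean_space set" and Fi :: "nat \<Rightarrow> 'a \<Rightarrow> 'a"
  assumes cvx: "convex Z" and cl: "closed Z" and eta: "\<eta> > 0" and mu: "\<mu> > 0" and n: "n \<ge> 1"
    and lip: "\<forall>i<n. L-lipschitz_on Z (Fi i)"
    and sm: "strongly_monotone_on Z \<mu> (avgF n Fi)"
    and ws: "ws \<in> Z" and vi: "\<forall>z\<in>Z. avgF n Fi ws \<bullet> (z - ws) \<ge> 0"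
    and z: "z \<in> Z" and wt: "wt \<in> Z"
  shows "(\<Sum>i<n. (norm (resolv Z \<eta> \<mu> w (z - \<eta> *\<^sub>R (svrgB n Fi \<mu> w wt - Gf Fi \<mu> w i wt + Gf Fi \<mu> w i z)) - ws))\<^sup>2) / real n
     \<le> (1/(1+\<eta>*\<mu>))\<^sup>2 * ((1 + 3*\<eta>\<^sup>2*(L+\<mu>)\<^sup>2) * (norm (z-ws))\<^sup>2 + 2*\<eta>\<^sup>2*(L+\<mu>)\<^sup>2*(norm (wt-ws))\<^sup>2)"
proof -
  define B where "B = svrgB n Fi \<mu> w"
  define G where "G = Gf Fi \<mu> w"
  define a where "a = \<eta> * \<mu>"
  define K where "K = (L + \<mu>)\<^sup>2"
  have Zne: "Z \<noteq> {}" using ws by auto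
  have L0: "L \<ge> 0" using lip n lipschitz_on_nonneg by auto
  have a0: "a > 0" using eta mu by (simp add: a_def)
  have nr: "real n > 0" using n by simp
  have BL: "norm (B x - B y) \<le> (L + \<mu>) * norm (x - y)" if "x \<in> Z" "y \<in> Z" for x y
  proof -
    have "B x - B y = (avgF n Fi x - avgF n Fi y) - \<mu> *\<^sub>R (x - y)"
      by (simp add: B_def svrgB_def algebra_simps)
    hence "norm (B x - B y) \<le> norm (avgF n Fi x - avgF n Fi y) + norm (\<mu> *\<^sub>R (x - y))"
      by (metis norm_triangle_ineq4)
    also have "\<dots> \<le> L * norm (x - y) + \<mu> * norm (x - y)"
      using avgF_lip[OF n lip that] mu by simp
    finally show ?thesis by (simp add: algebra_simps)
  qed
  have GL: "norm (G i x - G i y) \<le> (L + \<mu>) * norm (x - y)" if "x \<in> Z" "y \<in> Z" "i < n" for x y i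
  proof -
    have "G i x - G i y = (Fi i x - Fi i y) - \<mu> *\<^sub>R (x - y)"
      by (simp add: G_def Gf_def algebra_simps)
    hence "norm (G i x - G i y) \<le> norm (Fi i x - Fi i y) + norm (\<mu> *\<^sub>R (x - y))"
      by (metis norm_triangle_ineq4)
    also have "\<dots> \<le> L * norm (x - y) + \<mu> * norm (x - y)"
      using lipschitz_onD[of L Z "Fi i" x y] lip that mu by (simp add: dist_norm)
    finally show ?thesis by (simp add: algebra_simps)
  qed
  have Bmono: "(B z - B ws) \<bullet> (z - ws) \<ge> 0"
  proof -
    have "B z - B ws = (avgF n Fi z - avgF n Fi ws) - \<mu> *\<^sub>R (z - ws)"
      by (simp add: B_def svrgB_def algebra_simps)
    hence "(B z - B ws) \<bullet> (z - ws) = (avgF n Fi z - avgF n Fi ws) \<bullet> (z - ws) - \<mu> * (norm (z - ws))\<^sup>2"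
      by (simp add: inner_diff_left power2_norm_eq_inner)
    moreover have "(avgF n Fi z - avgF n Fi ws) \<bullet> (z - ws) \<ge> \<mu> * (norm (z - ws))\<^sup>2"
      using sm z ws by (simp add: strongly_monotone_on_def)
    ultimately show ?thesis by simp
  qed
  define vs where "vs = ws - \<eta> *\<^sub>R B ws"
  have Rfix: "resolv Z \<eta> \<mu> w vs = ws"
  proof -
    have "vs = ws - \<eta> *\<^sub>R (avgF n Fi ws - \<mu> *\<^sub>R (ws - w))"
      by (simp add: vs_def B_def svrgB_def)
    then show ?thesis using resolv_fixed[OF cvx cl Zne eta mu ws vi] by simp
  qed
  define A where "A = (z - ws) - \<eta> *\<^sub>R (B z - B ws)"
  define Y where "Y = (\<lambda>i. G i z - G i wt)"
  define Yb where "Yb = B z - B wt"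
  define W where "W = (\<lambda>i. \<eta> *\<^sub>R (Y i - Yb))"
  have vdiff: "z - \<eta> *\<^sub>R (B wt - G i wt + G i z) - vs = A - W i" for i
    by (simp add: A_def W_def Y_def Yb_def vs_def algebra_simps)
  have each: "(norm (resolv Z \<eta> \<mu> w (z - \<eta> *\<^sub>R (B wt - G i wt + G i z)) - ws))\<^sup>2
      \<le> (1/(1+a))\<^sup>2 * (norm (A - W i))\<^sup>2" for i
  proof -
    have "norm (resolv Z \<eta> \<mu> w (z - \<eta> *\<^sub>R (B wt - G i wt + G i z)) - ws)
        \<le> norm (A - W i) / (1 + a)"
      using resolv_props(2)[OF cvx cl Zne eta mu, of w "z - \<eta> *\<^sub>R (B wt - G i wt + G i z)" vs]
      unfolding Rfix vdiff a_def .
    hence "(norm (resolv Z \<eta> \<mu> w (z - \<eta> *\<^sub>R (B wt - G i wt + G i z)) - ws))\<^sup>2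
        \<le> (norm (A - W i) / (1 + a))\<^sup>2"
      by (rule power_mono) simp
    then show ?thesis by (simp add: power_divide)
  qed
  have sumY: "sum Y {..<n} = real n *\<^sub>R Yb"
    using sum_Gf[OF n, of Fi \<mu> w z] sum_Gf[OF n, of Fi \<mu> w wt]
    by (simp add: Y_def Yb_def G_def B_def sum_subtractf scaleR_diff_right)
  have sumW: "sum W {..<n} = 0"
    by (simp add: W_def scaleR_sum_right[symmetric] sum_subtractf sumY sum_constant_scaleR)
  have W2: "(\<Sum>i<n. (norm (W i))\<^sup>2) \<le> \<eta>\<^sup>2 * (\<Sum>i<n. (norm (Y i))\<^sup>2)"
  proof -
    have "(\<Sum>i<n. (norm (W i))\<^sup>2) = \<eta>\<^sup>2 * (\<Sum>i<n. (norm (Yb - Y i))\<^sup>2)"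
      using eta by (simp add: W_def sum_distrib_left power_mult_distrib norm_minus_commute)
    also have "(\<Sum>i<n. (norm (Yb - Y i))\<^sup>2) = real n * (norm Yb)\<^sup>2 - 2 * (Yb \<bullet> sum Y {..<n}) + (\<Sum>i<n. (norm (Y i))\<^sup>2)"
      by (rule sum_norm_sq[where I="{..<n}", simplified])
    also have "Yb \<bullet> sum Y {..<n} = real n * (norm Yb)\<^sup>2"
      by (simp add: sumY power2_norm_eq_inner)
    finally have "(\<Sum>i<n. (norm (W i))\<^sup>2) = \<eta>\<^sup>2 * ((\<Sum>i<n. (norm (Y i))\<^sup>2) - real n * (norm Yb)\<^sup>2)"
      by (simp add: algebra_simps)
    moreover have "\<eta>\<^sup>2 * (real n * (norm Yb)\<^sup>2) \<ge> 0" by simp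
    ultimately show ?thesis by (simp add: right_diff_distrib)
  qed
  have Y2: "(\<Sum>i<n. (norm (Y i))\<^sup>2) \<le> real n * (K * (2 * (norm (z - ws))\<^sup>2 + 2 * (norm (wt - ws))\<^sup>2))"
  proof -
    have zt: "(norm (z - wt))\<^sup>2 \<le> 2 * (norm (z - ws))\<^sup>2 + 2 * (norm (wt - ws))\<^sup>2"
    proof -
      have "norm (z - wt) \<le> norm (z - ws) + norm (wt - ws)"
        using norm_triangle_ineq4[of "z - ws" "wt - ws"] by simp
      hence "(norm (z - wt))\<^sup>2 \<le> (norm (z - ws) + norm (wt - ws))\<^sup>2"
        by (rule power_mono) simp
      then show ?thesis using sq_sum_le[of "norm (z - ws)" "norm (wt - ws)"] by linarith
    qed
    have "(norm (Y i))\<^sup>2 \<le> K * (2 * (norm (z - ws))\<^sup>2 + 2 * (norm (wt - ws))\<^sup>2)" if "i < n" for i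
    proof -
      have "norm (Y i) \<le> (L + \<mu>) * norm (z - wt)" unfolding Y_def using GL[OF z wt that] .
      hence "(norm (Y i))\<^sup>2 \<le> ((L + \<mu>) * norm (z - wt))\<^sup>2" by (rule power_mono) simp
      also have "\<dots> = K * (norm (z - wt))\<^sup>2" by (simp add: K_def power_mult_distrib)
      also have "\<dots> \<le> K * (2 * (norm (z - ws))\<^sup>2 + 2 * (norm (wt - ws))\<^sup>2)"
        using zt by (intro mult_left_mono) (auto simp: K_def)
      finally show ?thesis .
    qed
    then have "(\<Sum>i<n. (norm (Y i))\<^sup>2) \<le> (\<Sum>i<n. K * (2 * (norm (z - ws))\<^sup>2 + 2 * (norm (wt - ws))\<^sup>2))"
      by (intro sum_mono) auto
    then show ?thesis by simp
  qed
  have A2: "(norm A)\<^sup>2 \<le> (1 + \<eta>\<^sup>2 * K) * (norm (z - ws))\<^sup>2"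
  proof -
    have "(norm A)\<^sup>2 = (norm (z - ws))\<^sup>2 - 2 * ((z - ws) \<bullet> (\<eta> *\<^sub>R (B z - B ws))) + (norm (\<eta> *\<^sub>R (B z - B ws)))\<^sup>2"
      unfolding A_def by (rule norm_diff_sq)
    also have "(z - ws) \<bullet> (\<eta> *\<^sub>R (B z - B ws)) = \<eta> * ((B z - B ws) \<bullet> (z - ws))"
      by (simp add: inner_commute)
    also have "(norm (\<eta> *\<^sub>R (B z - B ws)))\<^sup>2 = \<eta>\<^sup>2 * (norm (B z - B ws))\<^sup>2"
      using eta by (simp add: power_mult_distrib)
    finally have eq: "(norm A)\<^sup>2 = (norm (z - ws))\<^sup>2 - 2 * (\<eta> * ((B z - B ws) \<bullet> (z - ws))) + \<eta>\<^sup>2 * (norm (B z - B ws))\<^sup>2" .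
    have "(norm (B z - B ws))\<^sup>2 \<le> ((L + \<mu>) * norm (z - ws))\<^sup>2"
      using BL[OF z ws] by (rule power_mono) simp
    hence "\<eta>\<^sup>2 * (norm (B z - B ws))\<^sup>2 \<le> \<eta>\<^sup>2 * ((L + \<mu>) * norm (z - ws))\<^sup>2"
      by (rule mult_left_mono) simp
    hence b2: "\<eta>\<^sup>2 * (norm (B z - B ws))\<^sup>2 \<le> \<eta>\<^sup>2 * K * (norm (z - ws))\<^sup>2"
      by (simp add: K_def power_mult_distrib mult.assoc)
    have m: "\<eta> * ((B z - B ws) \<bullet> (z - ws)) \<ge> 0" using eta Bmono by simp
    show ?thesis unfolding eq using b2 m by (simp add: algebra_simps)
  qed
  have S: "(\<Sum>i<n. (norm (A - W i))\<^sup>2) \<le> real n * ((1 + 3*\<eta>\<^sup>2*K) * (norm (z-ws))\<^sup>2 + 2*\<eta>\<^sup>2*K*(norm (wt-ws))\<^sup>2)"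
  proof -
    have "(\<Sum>i<n. (norm (A - W i))\<^sup>2) = real n * (norm A)\<^sup>2 + (\<Sum>i<n. (norm (W i))\<^sup>2)"
      using sum_norm_sq[of A W "{..<n}"] sumW by simp
    also have "\<dots> \<le> real n * ((1 + \<eta>\<^sup>2 * K) * (norm (z - ws))\<^sup>2) + \<eta>\<^sup>2 * (real n * (K * (2 * (norm (z - ws))\<^sup>2 + 2 * (norm (wt - ws))\<^sup>2)))"
    proof (rule add_mono)
      show "real n * (norm A)\<^sup>2 \<le> real n * ((1 + \<eta>\<^sup>2 * K) * (norm (z - ws))\<^sup>2)"
        using A2 by (intro mult_left_mono) auto
      show "(\<Sum>i<n. (norm (W i))\<^sup>2) \<le> \<eta>\<^sup>2 * (real n * (K * (2 * (norm (z - ws))\<^sup>2 + 2 * (norm (wt - ws))\<^sup>2)))"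
        using W2 Y2 by (meson order_trans mult_left_mono zero_le_power2)
    qed
    also have "\<dots> = real n * ((1 + 3*\<eta>\<^sup>2*K) * (norm (z-ws))\<^sup>2 + 2*\<eta>\<^sup>2*K*(norm (wt-ws))\<^sup>2)"
      by (simp add: algebra_simps)
    finally show ?thesis .
  qed
  have "(\<Sum>i<n. (norm (resolv Z \<eta> \<mu> w (z - \<eta> *\<^sub>R (B wt - G i wt + G i z)) - ws))\<^sup>2)
     \<le> (\<Sum>i<n. (1/(1+a))\<^sup>2 * (norm (A - W i))\<^sup>2)"
    by (intro sum_mono each)
  also have "\<dots> = (1/(1+a))\<^sup>2 * (\<Sum>i<n. (norm (A - W i))\<^sup>2)"
    by (simp add: sum_distrib_left)
  also have "\<dots> \<le> (1/(1+a))\<^sup>2 * (real n * ((1 + 3*\<eta>\<^sup>2*K) * (norm (z-ws))\<^sup>2 + 2*\<eta>\<^sup>2*K*(norm (wt-ws))\<^sup>2))"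
    using S by (intro mult_left_mono) auto
  finally have fin: "(\<Sum>i<n. (norm (resolv Z \<eta> \<mu> w (z - \<eta> *\<^sub>R (B wt - G i wt + G i z)) - ws))\<^sup>2) / real n
     \<le> (1/(1+a))\<^sup>2 * ((1 + 3*\<eta>\<^sup>2*K) * (norm (z-ws))\<^sup>2 + 2*\<eta>\<^sup>2*K*(norm (wt-ws))\<^sup>2)"
    using nr by (simp add: divide_le_eq algebra_simps)
  then show ?thesis by (simp add: B_def G_def a_def K_def)
qed

lemma inner_dep:
  "(\<forall>j<s. f j = g j) \<Longrightarrow> svrg_inner n Fi Z \<mu> \<eta> w wt f s = svrg_inner n Fi Z \<mu> \<eta> w wt g s"
  by (induction s) (auto simp: Let_def)

lemma outer_dep:
  "(\<forall>j<t*S. f j = g j) \<Longrightarrow> svrg_outer n Fi Z \<mu> \<eta> w w0 S f t = svrg_outer n Fi Z \<mu> \<eta> w w0 S g t"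
proof (induction t)
  case 0 then show ?case by simp
next
  case (Suc t)
  have "svrg_outer n Fi Z \<mu> \<eta> w w0 S f t = svrg_outer n Fi Z \<mu> \<eta> w w0 S g t"
    using Suc by (intro Suc.IH) auto
  moreover have "svrg_inner n Fi Z \<mu> \<eta> w x (\<lambda>s. f (t * S + s)) S = svrg_inner n Fi Z \<mu> \<eta> w x (\<lambda>s. g (t * S + s)) S" for x
    using Suc.prems by (intro inner_dep) auto
  ultimately show ?case by simp
qed

lemma inner_in:
  fixes Z :: "'a::euclidean_space set"
  assumes "convex Z" "closed Z" "\<eta> > 0" "\<mu> > 0" "wt \<in> Z"
  shows "svrg_inner n Fi Z \<mu> \<eta> w wt f s \<in> Z"
proof (cases s)
  case 0 then show ?thesis using assms by simp
next
  case (Suc s') then show ?thesis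
    using resolv_props(1)[OF assms(1,2) _ assms(3,4)] assms(5) by (auto simp: Let_def)
qed

lemma outer_in:
  fixes Z :: "'a::euclidean_space set"
  assumes "convex Z" "closed Z" "\<eta> > 0" "\<mu> > 0" "w0 \<in> Z"
  shows "svrg_outer n Fi Z \<mu> \<eta> w w0 S f t \<in> Z"
  using assms by (induction t) (auto intro: inner_in)

lemma inner_Suc:
  assumes "n \<ge> 1"
  shows "svrg_inner n Fi Z \<mu> \<eta> w wt f (Suc s) =
    resolv Z \<eta> \<mu> w (svrg_inner n Fi Z \<mu> \<eta> w wt f s - \<eta> *\<^sub>R
      (svrgB n Fi \<mu> w wt - Gf Fi \<mu> w (f s) wt + Gf Fi \<mu> w (f s) (svrg_inner n Fi Z \<mu> \<eta> w wt f s)))"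
proof -
  have *: "real n *\<^sub>R svrgBi n Fi \<mu> w i x = Gf Fi \<mu> w i x" for i x
    using assms by (simp add: svrgBi_def Gf_def scaleR_diff_right)
  show ?thesis by (simp add: Let_def *)
qed

lemma fin_Pi:
  "finite A \<Longrightarrow> n \<ge> 1 \<Longrightarrow> finite (set_pmf (Pi_pmf A d (\<lambda>_. pmf_of_set {..<n::nat})))"
proof -
  assume a: "finite A" "n \<ge> 1"
  have "set_pmf (pmf_of_set {..<n}) = {..<n}" using a by (intro set_pmf_of_set) (auto simp: lessThan_empty_iff)
  then show ?thesis using a by (subst set_Pi_pmf) (auto intro!: finite_PiE_dflt)
qed

lemma scalar_step:
  fixes a x :: real
  assumes a: "a > 0" and x: "0 \<le> x" "x \<le> 1"
  shows "(1/(1+a))\<^sup>2 * ((1+3*a/4)*(2/5+3/5*x) + a/2) \<le> 2/5 + 3/5*(x/(1+a))"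
proof -
  have p: "(1+a)\<^sup>2 > 0" using a by simp
  have h1: "((2/5)*(1+3*a/4) + a/2) / (1+a)\<^sup>2 \<le> 2/5"
  proof -
    have "(2/5)*(1+3*a/4) + a/2 \<le> 2/5 * (1+a)\<^sup>2"
      using a by (simp add: power2_eq_square algebra_simps)
    then show ?thesis using p by (simp add: divide_le_eq)
  qed
  have h2: "(1+3*a/4) / (1+a)\<^sup>2 \<le> 1 / (1+a)"
  proof -
    have "(1+3*a/4) * (1+a) \<le> (1+a)\<^sup>2" using a by (simp add: power2_eq_square algebra_simps)
    then show ?thesis using a p by (simp add: divide_simps)
  qed
  have "(1/(1+a))\<^sup>2 * ((1+3*a/4)*(2/5+3/5*x) + a/2)
      = ((2/5)*(1+3*a/4) + a/2) / (1+a)\<^sup>2 + 3/5*x * ((1+3*a/4) / (1+a)\<^sup>2)"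
    by (simp add: power_divide field_simps add_divide_distrib[symmetric])
  also have "\<dots> \<le> 2/5 + 3/5*x * (1/(1+a))"
    using h1 h2 x by (intro add_mono mult_left_mono) auto
  finally show ?thesis by simp
qed

lemma ring_aux: "(Q::real)*((1 + 3*(a/4))*(c*X) + 2*(a/4)*X) = (Q*((1+3*a/4)*c + a/2))*X"
  by (simp add: algebra_simps)

lemma epoch_bound:
  fixes Z :: "'a::euclidean_space set" and Fi :: "nat \<Rightarrow> 'a \<Rightarrow> 'a"
  assumes cvx: "convex Z" and cl: "closed Z" and eta: "\<eta> > 0" and mu: "\<mu> > 0" and n: "n \<ge> 1"
    and lip: "\<forall>i<n. L-lipschitz_on Z (Fi i)"
    and sm: "strongly_monotone_on Z \<mu> (avgF n Fi)"
    and ws: "ws \<in> Z" and vi: "\<forall>z\<in>Z. avgF n Fi ws \<bullet> (z - ws) \<ge> 0"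
    and w0: "w0 \<in> Z"
    and K: "4 * \<eta> * (L+\<mu>)\<^sup>2 = \<mu>"
    and t: "t < T"
  shows "s \<le> S \<Longrightarrow> measure_pmf.expectation (Pi_pmf {..<T*S} 0 (\<lambda>_. pmf_of_set {..<n}))
      (\<lambda>idx. (norm (svrg_inner n Fi Z \<mu> \<eta> w (svrg_outer n Fi Z \<mu> \<eta> w w0 S idx t) (\<lambda>s. idx (t*S+s)) s - ws))\<^sup>2)
    \<le> (2/5 + 3/5*(1/(1+\<eta>*\<mu>))^s) * measure_pmf.expectation (Pi_pmf {..<T*S} 0 (\<lambda>_. pmf_of_set {..<n}))
      (\<lambda>idx. (norm (svrg_outer n Fi Z \<mu> \<eta> w w0 S idx t - ws))\<^sup>2)"
proof (induction s)
  case 0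
  then show ?case by simp
next
  case (Suc s)
  define p where "p = Pi_pmf {..<T*S} 0 (\<lambda>_. pmf_of_set {..<n::nat})"
  define a where "a = \<eta> * \<mu>"
  define wt where "wt = (\<lambda>idx. svrg_outer n Fi Z \<mu> \<eta> w w0 S idx t)"
  define zs where "zs = (\<lambda>s idx. svrg_inner n Fi Z \<mu> \<eta> w (wt idx) (\<lambda>s. idx (t*S+s)) s)"
  define X where "X = measure_pmf.expectation p (\<lambda>idx. (norm (wt idx - ws))\<^sup>2)"
  define c where "c = 2/5 + 3/5*(1/(1+a))^s"
  have a0: "a > 0" using eta mu by (simp add: a_def)
  have X0: "X \<ge> 0" unfolding X_def by simp
  have fin: "finite (set_pmf p)" unfolding p_def using n by (intro fin_Pi) auto
  have IH: "measure_pmf.expectation p (\<lambda>idx. (norm (zs s idx - ws))\<^sup>2) \<le> c * X"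
    using Suc by (simp add: p_def zs_def wt_def X_def c_def a_def)
  define k where "k = t*S + s"
  have k: "k \<in> {..<T*S}"
  proof -
    have "t*S + s < t*S + S" using Suc.prems by simp
    also have "\<dots> = (t+1)*S" by simp
    also have "\<dots> \<le> T*S" using t by (intro mult_right_mono) auto
    finally show ?thesis by (simp add: k_def)
  qed
  have eta2: "\<eta>\<^sup>2 * (L+\<mu>)\<^sup>2 = a/4"
  proof -
    have e: "\<eta> * (L+\<mu>)\<^sup>2 = \<mu>/4" using K by simp
    have "\<eta>\<^sup>2 * (L+\<mu>)\<^sup>2 = \<eta> * (\<eta> * (L+\<mu>)\<^sup>2)" by (simp add: power2_eq_square)
    then show ?thesis using e by (simp add: a_def)
  qed
  have wtZ: "wt idx \<in> Z" for idx unfolding wt_def using outer_in[OF cvx cl eta mu w0] .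
  have zsZ: "zs s idx \<in> Z" for idx unfolding zs_def using inner_in[OF cvx cl eta mu wtZ] .
  have upd: "(norm (zs (Suc s) (idx(k:=x)) - ws))\<^sup>2 =
     (norm (resolv Z \<eta> \<mu> w (zs s idx - \<eta> *\<^sub>R (svrgB n Fi \<mu> w (wt idx) - Gf Fi \<mu> w x (wt idx) + Gf Fi \<mu> w x (zs s idx))) - ws))\<^sup>2"
    for idx x
  proof -
    have w1: "wt (idx(k:=x)) = wt idx"
      unfolding wt_def by (rule outer_dep) (auto simp: k_def)
    have z1: "zs s (idx(k:=x)) = zs s idx"
      unfolding zs_def w1 by (rule inner_dep) (auto simp: k_def)
    show ?thesis
      unfolding zs_def inner_Suc[OF n] using z1 w1 by (simp add: zs_def k_def)
  qed
  have pt: "measure_pmf.expectation (pmf_of_set {..<n}) (\<lambda>x. (norm (zs (Suc s) (idx(k:=x)) - ws))\<^sup>2)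
     \<le> (1/(1+a))\<^sup>2 * ((1 + 3*(a/4)) * (norm (zs s idx - ws))\<^sup>2 + 2*(a/4)*(norm (wt idx - ws))\<^sup>2)" for idx
  proof -
    have "measure_pmf.expectation (pmf_of_set {..<n}) (\<lambda>x. (norm (zs (Suc s) (idx(k:=x)) - ws))\<^sup>2)
      = (\<Sum>x<n. (norm (zs (Suc s) (idx(k:=x)) - ws))\<^sup>2) / real n"
      using n by (subst integral_pmf_of_set) (auto simp: lessThan_empty_iff)
    also have "\<dots> = (\<Sum>i<n. (norm (resolv Z \<eta> \<mu> w (zs s idx - \<eta> *\<^sub>R (svrgB n Fi \<mu> w (wt idx) - Gf Fi \<mu> w i (wt idx) + Gf Fi \<mu> w i (zs s idx))) - ws))\<^sup>2) / real n"
      by (simp only: upd)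
    also have "\<dots> \<le> (1/(1+\<eta>*\<mu>))\<^sup>2 * ((1 + 3*\<eta>\<^sup>2*(L+\<mu>)\<^sup>2) * (norm (zs s idx-ws))\<^sup>2 + 2*\<eta>\<^sup>2*(L+\<mu>)\<^sup>2*(norm (wt idx-ws))\<^sup>2)"
      by (rule step_bound[OF cvx cl eta mu n lip sm ws vi zsZ wtZ])
    also have "\<dots> = (1/(1+a))\<^sup>2 * ((1 + 3*(a/4)) * (norm (zs s idx - ws))\<^sup>2 + 2*(a/4)*(norm (wt idx - ws))\<^sup>2)"
    proof -
      have "3*\<eta>\<^sup>2*(L+\<mu>)\<^sup>2 = 3*(a/4)" "2*\<eta>\<^sup>2*(L+\<mu>)\<^sup>2 = 2*(a/4)"
        using eta2 by (simp_all add: mult.assoc)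
      then show ?thesis by (simp only: a_def)
    qed
    finally show ?thesis .
  qed
  have "measure_pmf.expectation p (\<lambda>idx. (norm (zs (Suc s) idx - ws))\<^sup>2)
      = measure_pmf.expectation p (\<lambda>idx. measure_pmf.expectation (pmf_of_set {..<n}) (\<lambda>x. (norm (zs (Suc s) (idx(k:=x)) - ws))\<^sup>2))"
    unfolding p_def using k n
    by (intro expectation_Pi_decomp) (auto simp: lessThan_empty_iff)
  also have "\<dots> \<le> measure_pmf.expectation p (\<lambda>idx. (1/(1+a))\<^sup>2 * ((1 + 3*(a/4)) * (norm (zs s idx - ws))\<^sup>2 + 2*(a/4)*(norm (wt idx - ws))\<^sup>2))"
    using fin pt by (intro integral_mono integrable_measure_pmf_finite) auto
  also have "\<dots> = (1/(1+a))\<^sup>2 * ((1 + 3*(a/4)) * measure_pmf.expectation p (\<lambda>idx. (norm (zs s idx - ws))\<^sup>2) + 2*(a/4)*X)"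
  proof -
    have i1: "integrable p f" for f :: "_ \<Rightarrow> real" using fin by (rule integrable_measure_pmf_finite)
    show ?thesis unfolding X_def
      by (simp only: integral_mult_right_zero Bochner_Integration.integral_add[OF i1 i1])
  qed
  also have "\<dots> \<le> (1/(1+a))\<^sup>2 * ((1 + 3*(a/4)) * (c * X) + 2*(a/4)*X)"
    using IH a0 by (intro mult_left_mono add_mono) auto
  also have "\<dots> = ((1/(1+a))\<^sup>2 * ((1+3*a/4)*(2/5+3/5*(1/(1+a))^s) + a/2)) * X"
    unfolding c_def by (rule ring_aux)
  also have "\<dots> \<le> (2/5 + 3/5*((1/(1+a))^s/(1+a))) * X"
    using X0 a0 by (intro mult_right_mono scalar_step) (auto simp: power_le_one)
  also have "(1/(1+a))^s/(1+a) = (1/(1+a))^(Suc s)" by (simp add: power_divide)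
  finally show ?case
    unfolding p_def zs_def wt_def X_def a_def .
qed

lemma outer_bound:
  fixes Z :: "'a::euclidean_space set" and Fi :: "nat \<Rightarrow> 'a \<Rightarrow> 'a"
  assumes cvx: "convex Z" and cl: "closed Z" and eta: "\<eta> > 0" and mu: "\<mu> > 0" and n: "n \<ge> 1"
    and lip: "\<forall>i<n. L-lipschitz_on Z (Fi i)"
    and sm: "strongly_monotone_on Z \<mu> (avgF n Fi)"
    and ws: "ws \<in> Z" and vi: "\<forall>z\<in>Z. avgF n Fi ws \<bullet> (z - ws) \<ge> 0"
    and w0: "w0 \<in> Z"
    and K: "4 * \<eta> * (L+\<mu>)\<^sup>2 = \<mu>"
    and Sa: "real S * (\<eta> * \<mu>) \<ge> 5/7"
    and D: "norm (w0 - ws) \<le> D"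
  shows "t \<le> T \<Longrightarrow> measure_pmf.expectation (Pi_pmf {..<T*S} 0 (\<lambda>_. pmf_of_set {..<n}))
      (\<lambda>idx. (norm (svrg_outer n Fi Z \<mu> \<eta> w w0 S idx t - ws))\<^sup>2) \<le> (3/4)^t * D\<^sup>2"
proof (induction t)
  case 0
  have "(norm (w0 - ws))\<^sup>2 \<le> D\<^sup>2" using D by (intro power_mono) auto
  then show ?case by simp
next
  case (Suc t)
  define p where "p = Pi_pmf {..<T*S} 0 (\<lambda>_. pmf_of_set {..<n::nat})"
  define a where "a = \<eta> * \<mu>"
  have a0: "a > 0" using eta mu by (simp add: a_def)
  have t: "t < T" using Suc.prems by simp
  have rho: "(1/(1+a))^S \<le> 7/12"
  proof -
    have "1 + real S * a \<le> (1 + a)^S" using a0 by (intro Bernoulli_inequality) auto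
    moreover have "1 + real S * a \<ge> 12/7" using Sa by (simp add: a_def)
    ultimately have "(1+a)^S \<ge> 12/7" by linarith
    then show ?thesis by (simp add: power_divide divide_le_eq)
  qed
  have "measure_pmf.expectation p (\<lambda>idx. (norm (svrg_outer n Fi Z \<mu> \<eta> w w0 S idx (Suc t) - ws))\<^sup>2)
     = measure_pmf.expectation p (\<lambda>idx. (norm (svrg_inner n Fi Z \<mu> \<eta> w (svrg_outer n Fi Z \<mu> \<eta> w w0 S idx t) (\<lambda>s. idx (t*S+s)) S - ws))\<^sup>2)"
    by simp
  also have "\<dots> \<le> (2/5 + 3/5*(1/(1+a))^S) * measure_pmf.expectation p (\<lambda>idx. (norm (svrg_outer n Fi Z \<mu> \<eta> w w0 S idx t - ws))\<^sup>2)"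
    unfolding p_def a_def by (rule epoch_bound[OF cvx cl eta mu n lip sm ws vi w0 K t]) simp
  also have "\<dots> \<le> (3/4) * ((3/4)^t * D\<^sup>2)"
    using Suc.IH[OF less_imp_le[OF t]] rho unfolding p_def
    by (intro mult_mono) auto
  finally show ?case by (simp add: p_def)
qed

lemma vi_fixed:
  fixes Z :: "'a::euclidean_space set"
  assumes "convex Z" "closed Z" "ws \<in> Z" "\<forall>z\<in>Z. g \<bullet> (z - ws) \<ge> 0" "c \<ge> 0"
  shows "closest_point Z (ws - c *\<^sub>R g) = ws"
proof -
  have "ws = closest_point Z (ws - c *\<^sub>R g)"
  proof (rule closest_point_unique[OF assms(1,2,3)], intro ballI)
    fix z assume z: "z \<in> Z"
    have e1: "dist (ws - c *\<^sub>R g) z = norm ((ws - z) - c *\<^sub>R g)"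
      unfolding dist_norm by (rule arg_cong[where f=norm]) simp
    have e2: "(norm ((ws - z) - c *\<^sub>R g))\<^sup>2 = (norm (ws - z))\<^sup>2 - 2 * ((ws - z) \<bullet> (c *\<^sub>R g)) + (norm (c *\<^sub>R g))\<^sup>2"
      by (rule norm_diff_sq)
    have e3: "(ws - z) \<bullet> (c *\<^sub>R g) = - (c * (g \<bullet> (z - ws)))"
    proof -
      have "(ws - z) \<bullet> g = - (g \<bullet> (z - ws))" by (simp add: inner_commute inner_diff_right inner_diff_left)
      then show ?thesis by (simp only: inner_scaleR_right)
    qed
    have e4: "c * (g \<bullet> (z - ws)) \<ge> 0" using assms(4,5) z by simp
    have e5: "(norm (ws - z))\<^sup>2 \<ge> 0" by simp
    have e6: "dist (ws - c *\<^sub>R g) ws = norm (c *\<^sub>R g)" by (simp add: dist_norm)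
    have "(dist (ws - c *\<^sub>R g) ws)\<^sup>2 \<le> (dist (ws - c *\<^sub>R g) z)\<^sup>2"
      unfolding e1 e2 e3 e6 using e4 e5 by linarith
    then show "dist (ws - c *\<^sub>R g) ws \<le> dist (ws - c *\<^sub>R g) z"
      by (rule power2_le_imp_le) simp_all
  qed
  then show ?thesis by (rule sym)
qed

lemma firm_nonexp:
  fixes Z :: "'a::euclidean_space set"
  assumes "convex Z" "closed Z" "Z \<noteq> {}"
  shows "(norm (closest_point Z x - closest_point Z y))\<^sup>2 \<le> (closest_point Z x - closest_point Z y) \<bullet> (x - y)"
proof -
  have "inner (x - closest_point Z x) (closest_point Z y - closest_point Z x) \<le> 0"
    and "inner (y - closest_point Z y) (closest_point Z x - closest_point Z y) \<le> 0"
    by (simp_all add: assms closest_point_dot closest_point_in_set)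
  then show ?thesis unfolding power2_norm_eq_inner
    by (simp add: inner_diff_left inner_diff_right inner_commute)
qed

lemma gap_bound:
  fixes Z :: "'a::euclidean_space set" and F :: "'a \<Rightarrow> 'a"
  assumes cvx: "convex Z" and cl: "closed Z" and L0: "L \<ge> 0"
    and Flip: "\<forall>x\<in>Z. \<forall>y\<in>Z. norm (F x - F y) \<le> L * norm (x - y)"
    and sm: "\<forall>x\<in>Z. \<forall>y\<in>Z. (F x - F y) \<bullet> (x - y) \<ge> \<mu> * (norm (x - y))\<^sup>2"
    and mu: "\<mu> > 0"
    and ws: "ws \<in> Z" and vi: "\<forall>z\<in>Z. F ws \<bullet> (z - ws) \<ge> 0"
    and u: "u \<in> Z" and Dz: "\<forall>z\<in>Z. \<forall>z'\<in>Z. norm (z - z') \<le> D"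
  defines "zb \<equiv> closest_point Z (u - (1/(sqrt 2 * L)) *\<^sub>R F u)"
  shows "(SUP z\<in>Z. F zb \<bullet> (zb - z)) \<le> (2 + sqrt 2) * L * D * norm (u - ws)"
    and "\<mu> * (norm (zb - ws))\<^sup>2 \<le> (SUP z\<in>Z. F zb \<bullet> (zb - z))"
proof -
  have Zne: "Z \<noteq> {}" using ws by auto
  have zbZ: "zb \<in> Z" unfolding zb_def using closest_point_in_set[OF cl Zne] .
  have bdd: "bdd_above ((\<lambda>z. F zb \<bullet> (zb - z)) ` Z)"
  proof (rule bdd_aboveI2)
    fix z assume z: "z \<in> Z"
    have "F zb \<bullet> (zb - z) \<le> norm (F zb) * norm (zb - z)" by (rule norm_cauchy_schwarz)
    also have "\<dots> \<le> norm (F zb) * D" using Dz zbZ z by (intro mult_left_mono) auto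
    finally show "F zb \<bullet> (zb - z) \<le> norm (F zb) * D" .
  qed
  show "\<mu> * (norm (zb - ws))\<^sup>2 \<le> (SUP z\<in>Z. F zb \<bullet> (zb - z))"
  proof -
    have "\<mu> * (norm (zb - ws))\<^sup>2 \<le> (F zb - F ws) \<bullet> (zb - ws)" using sm zbZ ws by auto
    also have "\<dots> = F zb \<bullet> (zb - ws) - F ws \<bullet> (zb - ws)" by (simp add: inner_diff_left)
    also have "\<dots> \<le> F zb \<bullet> (zb - ws)" using vi zbZ by auto
    also have "\<dots> \<le> (SUP z\<in>Z. F zb \<bullet> (zb - z))" using bdd ws by (rule cSUP_upper2) simp
    finally show ?thesis .
  qed
  show "(SUP z\<in>Z. F zb \<bullet> (zb - z)) \<le> (2 + sqrt 2) * L * D * norm (u - ws)"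
  proof (rule cSUP_least[OF Zne])
    fix z assume z: "z \<in> Z"
    show "F zb \<bullet> (zb - z) \<le> (2 + sqrt 2) * L * D * norm (u - ws)"
    proof (cases "L = 0")
      case True
      have "x = y" if "x \<in> Z" "y \<in> Z" for x y
      proof -
        have "norm (F x - F y) \<le> L * norm (x - y)" using Flip that by blast
        then have Fe: "F x = F y" using True by simp
        have "\<mu> * (norm (x - y))\<^sup>2 \<le> (F x - F y) \<bullet> (x - y)" using sm that by blast
        then have "\<mu> * (norm (x - y))\<^sup>2 \<le> 0" using Fe by simp
        then have "(norm (x - y))\<^sup>2 \<le> 0" using mu by (simp add: mult_le_0_iff)
        then show ?thesis by simp
      qed
      then have "zb = z" using zbZ z by blast
      then show ?thesis using True by simp
    next
      case False
      then have Lp: "L > 0" using L0 by simp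
      define \<gamma> where "\<gamma> = 1/(sqrt 2 * L)"
      have g0: "\<gamma> > 0" using Lp by (simp add: \<gamma>_def)
      have gL: "\<gamma> * L \<le> 1"
      proof -
        have "\<gamma> * L = 1 / sqrt 2" using Lp by (simp add: \<gamma>_def)
        also have "\<dots> \<le> 1" by simp
        finally show ?thesis .
      qed
      have ig: "1/\<gamma> = sqrt 2 * L" by (simp add: \<gamma>_def)
      have zb': "zb = closest_point Z (u - \<gamma> *\<^sub>R F u)" by (simp add: zb_def \<gamma>_def)
      have wsfix: "closest_point Z (ws - \<gamma> *\<^sub>R F ws) = ws"
        using vi_fixed[OF cvx cl ws vi] g0 by simp
      define d where "d = u - ws"
      define p where "p = zb - ws"
      have firm: "(norm p)\<^sup>2 \<le> p \<bullet> (d - \<gamma> *\<^sub>R (F u - F ws))"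
      proof -
        have "(norm (closest_point Z (u - \<gamma> *\<^sub>R F u) - closest_point Z (ws - \<gamma> *\<^sub>R F ws)))\<^sup>2
            \<le> (closest_point Z (u - \<gamma> *\<^sub>R F u) - closest_point Z (ws - \<gamma> *\<^sub>R F ws)) \<bullet> ((u - \<gamma> *\<^sub>R F u) - (ws - \<gamma> *\<^sub>R F ws))"
          by (rule firm_nonexp[OF cvx cl Zne])
        moreover have "(u - \<gamma> *\<^sub>R F u) - (ws - \<gamma> *\<^sub>R F ws) = d - \<gamma> *\<^sub>R (F u - F ws)"
          by (simp add: d_def algebra_simps)
        ultimately show ?thesis unfolding wsfix zb'[symmetric] p_def by simp
      qed
      have FL: "norm (F u - F ws) \<le> L * norm d" using Flip u ws by (simp add: d_def)
      have cs: "\<bar>p \<bullet> (F u - F ws)\<bar> \<le> norm p * (L * norm d)"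
        using Cauchy_Schwarz_ineq2[of p "F u - F ws"] FL
        by (meson mult_left_mono norm_ge_zero order_trans)
      have pd: "(norm p)\<^sup>2 \<le> p \<bullet> d + \<gamma> * (norm p * (L * norm d))"
      proof -
        have "p \<bullet> (d - \<gamma> *\<^sub>R (F u - F ws)) = p \<bullet> d - \<gamma> * (p \<bullet> (F u - F ws))"
          by (simp add: inner_diff_right)
        moreover have "- (\<gamma> * (p \<bullet> (F u - F ws))) \<le> \<gamma> * (norm p * (L * norm d))"
        proof -
          have "- (p \<bullet> (F u - F ws)) \<le> norm p * (L * norm d)" using cs by linarith
          then have "\<gamma> * (- (p \<bullet> (F u - F ws))) \<le> \<gamma> * (norm p * (L * norm d))"
            using g0 by (intro mult_left_mono) auto
          then show ?thesis by simp
        qed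
        ultimately show ?thesis using firm by linarith
      qed
      have dp: "(norm (u - zb))\<^sup>2 \<le> 2 * (norm (u - ws))\<^sup>2"
      proof -
        have uz: "u - zb = d - p" by (simp add: d_def p_def)
        have "(norm (d - p))\<^sup>2 = (norm d)\<^sup>2 - 2 * (d \<bullet> p) + (norm p)\<^sup>2" by (rule norm_diff_sq)
        also have "\<dots> \<le> (norm d)\<^sup>2 + 2 * (\<gamma> * L * norm d) * norm p - (norm p)\<^sup>2"
        proof -
          have "d \<bullet> p = p \<bullet> d" by (rule inner_commute)
          moreover have "\<gamma> * (norm p * (L * norm d)) = \<gamma> * L * norm d * norm p" by (simp add: mult_ac)
          ultimately show ?thesis using pd by linarith
        qed
        also have "\<dots> \<le> (norm d)\<^sup>2 + (\<gamma> * L * norm d)\<^sup>2"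
        proof -
          have "0 \<le> (\<gamma> * L * norm d - norm p)\<^sup>2" by simp
          then show ?thesis unfolding power2_diff by linarith
        qed
        also have "\<dots> \<le> (norm d)\<^sup>2 + (norm d)\<^sup>2"
        proof -
          have "\<gamma> * L * norm d \<le> norm d" using gL g0 Lp by (simp add: mult_left_le_one_le)
          then have "(\<gamma> * L * norm d)\<^sup>2 \<le> (norm d)\<^sup>2" using g0 Lp by (intro power_mono) auto
          then show ?thesis by simp
        qed
        finally show ?thesis unfolding uz d_def by simp
      qed
      have dz: "norm (u - zb) \<le> sqrt 2 * norm (u - ws)"
      proof -
        have "norm (u - zb) \<le> sqrt (2 * (norm (u - ws))\<^sup>2)" using dp by (simp add: real_le_rsqrt)
        also have "\<dots> = sqrt 2 * norm (u - ws)" by (simp add: real_sqrt_mult)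
        finally show ?thesis .
      qed
      have proj: "(u - \<gamma> *\<^sub>R F u - zb) \<bullet> (z - zb) \<le> 0"
        unfolding zb' using closest_point_dot[OF cvx cl z] .
      have "\<gamma> * (F u \<bullet> (zb - z)) \<le> (u - zb) \<bullet> (zb - z)"
      proof -
        have "(u - \<gamma> *\<^sub>R F u - zb) \<bullet> (z - zb) = - ((u - zb) \<bullet> (zb - z)) + \<gamma> * (F u \<bullet> (zb - z))"
          by (simp add: inner_diff_left inner_diff_right inner_commute right_diff_distrib)
        then show ?thesis using proj by linarith
      qed
      hence t1: "F u \<bullet> (zb - z) \<le> sqrt 2 * L * ((u - zb) \<bullet> (zb - z))"
      proof -
        assume h: "\<gamma> * (F u \<bullet> (zb - z)) \<le> (u - zb) \<bullet> (zb - z)"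
        have "sqrt 2 * L * (\<gamma> * (F u \<bullet> (zb - z))) \<le> sqrt 2 * L * ((u - zb) \<bullet> (zb - z))"
          by (rule mult_left_mono[OF h]) (simp add: Lp less_imp_le)
        moreover have "sqrt 2 * L * \<gamma> = 1" using Lp by (simp add: \<gamma>_def)
        ultimately show ?thesis by (simp add: mult.assoc[symmetric])
      qed
      have t2: "(u - zb) \<bullet> (zb - z) \<le> norm (u - zb) * D"
      proof -
        have "(u - zb) \<bullet> (zb - z) \<le> norm (u - zb) * norm (zb - z)" by (rule norm_cauchy_schwarz)
        also have "\<dots> \<le> norm (u - zb) * D" using Dz zbZ z by (intro mult_left_mono) auto
        finally show ?thesis .
      qed
      have t3: "(F zb - F u) \<bullet> (zb - z) \<le> L * norm (u - zb) * D"
      proof -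
        have "(F zb - F u) \<bullet> (zb - z) \<le> norm (F zb - F u) * norm (zb - z)" by (rule norm_cauchy_schwarz)
        also have "\<dots> \<le> (L * norm (zb - u)) * D"
          using Flip Dz zbZ z u Lp by (intro mult_mono) auto
        finally show ?thesis by (simp add: norm_minus_commute)
      qed
      have "F zb \<bullet> (zb - z) = F u \<bullet> (zb - z) + (F zb - F u) \<bullet> (zb - z)"
        by (simp add: inner_diff_left)
      also have "\<dots> \<le> sqrt 2 * L * (norm (u - zb) * D) + L * norm (u - zb) * D"
      proof -
        have "sqrt 2 * L * ((u - zb) \<bullet> (zb - z)) \<le> sqrt 2 * L * (norm (u - zb) * D)"
          by (rule mult_left_mono[OF t2]) (simp add: Lp less_imp_le)
        then show ?thesis using t1 t3 by linarith
      qed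
      also have "\<dots> = (1 + sqrt 2) * L * D * norm (u - zb)" by (simp add: algebra_simps)
      also have "\<dots> \<le> (1 + sqrt 2) * L * D * (sqrt 2 * norm (u - ws))"
      proof (rule mult_left_mono[OF dz])
        have "D \<ge> 0" using Dz ws by force
        then show "0 \<le> (1 + sqrt 2) * L * D" using Lp by simp
      qed
      also have "\<dots> = (2 + sqrt 2) * L * D * norm (u - ws)" by (simp add: algebra_simps)
      finally show ?thesis .
    qed
  qed
qed

lemma exp_le_sqrt:
  fixes f :: "'b \<Rightarrow> real"
  assumes fin: "finite (set_pmf p)" and nn: "\<And>x. f x \<ge> 0"
  shows "measure_pmf.expectation p f \<le> sqrt (measure_pmf.expectation p (\<lambda>x. (f x)\<^sup>2))"
proof -
  define m where "m = measure_pmf.expectation p f"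
  have i: "integrable p g" for g :: "'b \<Rightarrow> real" using fin by (rule integrable_measure_pmf_finite)
  have "0 \<le> measure_pmf.expectation p (\<lambda>x. (f x - m)\<^sup>2)" by simp
  also have "measure_pmf.expectation p (\<lambda>x. (f x - m)\<^sup>2) =
     measure_pmf.expectation p (\<lambda>x. (f x)\<^sup>2 - 2 * m * f x + m\<^sup>2)"
    by (simp add: power2_diff algebra_simps)
  also have "\<dots> = measure_pmf.expectation p (\<lambda>x. (f x)\<^sup>2) - 2 * m * m + m\<^sup>2"
    using i by (simp add: m_def)
  finally have "m\<^sup>2 \<le> measure_pmf.expectation p (\<lambda>x. (f x)\<^sup>2)" by (simp add: power2_eq_square)
  moreover have "m \<ge> 0" unfolding m_def using nn by simp
  ultimately show ?thesis unfolding m_def[symmetric] by (simp add: real_le_rsqrt)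
qed

theorem proposition14:
  fixes Z :: "'a::euclidean_space set"
    and Fi :: "nat \<Rightarrow> 'a \<Rightarrow> 'a"
    and n :: nat and D L \<mu> :: real and w w0 ws :: 'a and T :: nat
  assumes "convex Z" and "compact Z"
    and "\<forall>z\<in>Z. \<forall>z'\<in>Z. norm (z - z') \<le> D"
    and "n \<ge> 1"
    and "\<forall>i<n. L-lipschitz_on Z (Fi i)"
    and "\<mu> > 0"
    and "strongly_monotone_on Z \<mu> (avgF n Fi)"
    and "w \<in> Z" and "w0 \<in> Z" and "T \<ge> 1"
    and "ws \<in> Z" and "\<forall>z\<in>Z. avgF n Fi ws \<bullet> (z - ws) \<ge> 0"
  shows "measure_pmf.expectation (svrg_samples n \<mu> L T)
           (\<lambda>idx. let zb = svrg_output n Fi Z \<mu> L w w0 T idx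
                  in (SUP z\<in>Z. avgF n Fi zb \<bullet> (zb - z)))
         \<le> D\<^sup>2 * L * (2 + sqrt 2) * (sqrt 3 / 2) ^ T
       \<and> \<mu> * measure_pmf.expectation (svrg_samples n \<mu> L T)
           (\<lambda>idx. (norm (svrg_output n Fi Z \<mu> L w w0 T idx - ws))\<^sup>2)
         \<le> D\<^sup>2 * L * (2 + sqrt 2) * (sqrt 3 / 2) ^ T"
proof -
  note cvx = assms(1) and Dz = assms(3) and n = assms(4) and lip = assms(5) and mu = assms(6)
    and sm = assms(7) and w0 = assms(9) and ws = assms(11) and vi = assms(12)
  have cl: "closed Z" using assms(2) by (rule compact_imp_closed)
  have L0: "L \<ge> 0" using lip n lipschitz_on_nonneg by auto
  define \<eta> where "\<eta> = \<mu> / (4 * (L + \<mu>)\<^sup>2)"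
  define S where "S = nat \<lceil>4 * ln 4 * (L + \<mu>)\<^sup>2 / \<mu>\<^sup>2\<rceil>"
  define p where "p = Pi_pmf {..<T*S} 0 (\<lambda>_. pmf_of_set {..<n::nat})"
  define wT where "wT = (\<lambda>idx. svrg_outer n Fi Z \<mu> \<eta> w w0 S idx T)"
  define zb where "zb = (\<lambda>idx. closest_point Z (wT idx - (1 / (sqrt 2 * L)) *\<^sub>R avgF n Fi (wT idx)))"
  define gap where "gap = (\<lambda>idx. SUP z\<in>Z. avgF n Fi (zb idx) \<bullet> (zb idx - z))"
  define R where "R = D\<^sup>2 * L * (2 + sqrt 2) * (sqrt 3 / 2) ^ T"
  have Lm: "L + \<mu> > 0" using L0 mu by simp
  have eta: "\<eta> > 0" using mu Lm by (simp add: \<eta>_def)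
  have K: "4 * \<eta> * (L+\<mu>)\<^sup>2 = \<mu>" using Lm by (simp add: \<eta>_def)
  have ln4: "ln 4 \<ge> (3/4::real)"
  proof -
    have "ln (1/4::real) \<le> 1/4 - 1" by (rule ln_le_minus_one) simp
    moreover have "ln (1/4::real) = - ln 4" by (simp add: ln_div)
    ultimately show ?thesis by simp
  qed
  have Sa: "real S * (\<eta> * \<mu>) \<ge> 5/7"
  proof -
    have Sge: "real S \<ge> 4 * ln 4 * (L + \<mu>)\<^sup>2 / \<mu>\<^sup>2" unfolding S_def by (rule real_nat_ceiling_ge)
    have em: "\<eta> * \<mu> = \<mu>\<^sup>2 / (4 * (L + \<mu>)\<^sup>2)" by (simp add: \<eta>_def power2_eq_square)
    have "real S * (\<eta> * \<mu>) \<ge> (4 * ln 4 * (L + \<mu>)\<^sup>2 / \<mu>\<^sup>2) * (\<mu>\<^sup>2 / (4 * (L + \<mu>)\<^sup>2))"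
      unfolding em using Sge mu by (intro mult_right_mono) auto
    also have "(4 * ln 4 * (L + \<mu>)\<^sup>2 / \<mu>\<^sup>2) * (\<mu>\<^sup>2 / (4 * (L + \<mu>)\<^sup>2)) = ln 4"
      using mu Lm by (simp add: field_simps)
    finally show ?thesis using ln4 by linarith
  qed
  have Dw: "norm (w0 - ws) \<le> D" using Dz w0 ws by blast
  have D0: "D \<ge> 0" using Dz ws by force
  have fin: "finite (set_pmf p)" unfolding p_def using n by (intro fin_Pi) auto
  have int: "integrable p f" for f :: "_ \<Rightarrow> real" using fin by (rule integrable_measure_pmf_finite)
  have E1: "measure_pmf.expectation p (\<lambda>idx. (norm (wT idx - ws))\<^sup>2) \<le> (3/4)^T * D\<^sup>2"
    unfolding p_def wT_def
    by (rule outer_bound[OF cvx cl eta mu n lip sm ws vi w0 K Sa Dw]) simp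
  have wTZ: "wT idx \<in> Z" for idx unfolding wT_def by (rule outer_in[OF cvx cl eta mu w0])
  have Flip: "\<forall>x\<in>Z. \<forall>y\<in>Z. norm (avgF n Fi x - avgF n Fi y) \<le> L * norm (x - y)"
    using avgF_lip[OF n lip] by blast
  have sm': "\<forall>x\<in>Z. \<forall>y\<in>Z. (avgF n Fi x - avgF n Fi y) \<bullet> (x - y) \<ge> \<mu> * (norm (x - y))\<^sup>2"
    using sm by (simp add: strongly_monotone_on_def)
  have g1: "gap idx \<le> (2 + sqrt 2) * L * D * norm (wT idx - ws)" for idx
    unfolding gap_def zb_def by (rule gap_bound(1)[OF cvx cl L0 Flip sm' mu ws vi wTZ Dz])
  have g2: "\<mu> * (norm (zb idx - ws))\<^sup>2 \<le> gap idx" for idx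
    unfolding gap_def zb_def by (rule gap_bound(2)[OF cvx cl L0 Flip sm' mu ws vi wTZ Dz])
  have sq: "sqrt ((3/4)^T * D\<^sup>2) = (sqrt 3 / 2)^T * D"
  proof -
    have "sqrt ((3/4::real)^T) = (sqrt 3 / 2)^T"
    proof -
      have s4: "sqrt (4::real) = 2" by (rule real_sqrt_unique) auto
      show ?thesis by (simp add: real_sqrt_power real_sqrt_divide s4)
    qed
    then show ?thesis using D0 by (simp add: real_sqrt_mult)
  qed
  have Egap: "measure_pmf.expectation p gap \<le> R"
  proof -
    have "measure_pmf.expectation p gap \<le> measure_pmf.expectation p (\<lambda>idx. (2 + sqrt 2) * L * D * norm (wT idx - ws))"
      using g1 by (intro integral_mono int) auto
    also have "\<dots> = (2 + sqrt 2) * L * D * measure_pmf.expectation p (\<lambda>idx. norm (wT idx - ws))"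
      by simp
    also have "\<dots> \<le> (2 + sqrt 2) * L * D * sqrt (measure_pmf.expectation p (\<lambda>idx. (norm (wT idx - ws))\<^sup>2))"
      using L0 D0 by (intro mult_left_mono exp_le_sqrt[OF fin]) auto
    also have "\<dots> \<le> (2 + sqrt 2) * L * D * sqrt ((3/4)^T * D\<^sup>2)"
      using L0 D0 E1 by (intro mult_left_mono real_sqrt_le_mono) auto
    also have "\<dots> = R" unfolding sq R_def by (simp add: power2_eq_square mult_ac)
    finally show ?thesis .
  qed
  have Edist: "\<mu> * measure_pmf.expectation p (\<lambda>idx. (norm (zb idx - ws))\<^sup>2) \<le> R"
  proof -
    have "\<mu> * measure_pmf.expectation p (\<lambda>idx. (norm (zb idx - ws))\<^sup>2)
        = measure_pmf.expectation p (\<lambda>idx. \<mu> * (norm (zb idx - ws))\<^sup>2)" by simp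
    also have "\<dots> \<le> measure_pmf.expectation p gap"
      using g2 by (intro integral_mono int) auto
    finally show ?thesis using Egap by linarith
  qed
  have samp: "svrg_samples n \<mu> L T = p" by (simp add: svrg_samples_def p_def S_def Let_def)
  have outp: "svrg_output n Fi Z \<mu> L w w0 T idx = zb idx" for idx
    by (simp add: svrg_output_def zb_def wT_def \<eta>_def S_def Let_def)
  show ?thesis
    unfolding samp outp Let_def using Egap Edist by (simp add: gap_def R_def)
qed

end
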